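(* Let $b\in\mathcal S(\kappa,R,\lambda)$ with $\kappa>0$, $R,\lambda\ge0$. For $\varsigma\in\mathcal C([0,1],\mathbb R^n)$ with $\varsigma(0)=0$, $u\in L^\infty([0,1],\mathbb R^n)$ and $x_0\in\mathbb R^n$, let $x^{\varsigma,u}$ solve $x^{\varsigma,u}(t)=x_0+\int_0^tb(x^{\varsigma,u}(s))\,ds+\varsigma(t)+\int_0^tu(s)\,ds$, $t\in[0,1]$. Let $\eta<\frac12$ and $\bar R>0$. Then there is $M>0$ such that for each such $\varsigma$ and each $x_0\in\mathbb R^n$ there is a piecewise constant control $u\in L^\infty([0,1],\mathbb R^n)$ with $|u|_\infty+|\mathcal D_u|\le M$ such that $\mathrm{Leb}(\{t\in[0,1]:|x^{\varsigma,u}(t)|>\bar R\})\ge\eta$.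
   Context: $\mathcal S(\kappa,R,\lambda)$ is the set of Lipschitz $b:\mathbb R^n\to\mathbb R^n$ with $\langle b(x)-b(y),x-y\rangle\le-\kappa|x-y|^2$ if $|x|,|y|\ge R$ and $\le\lambda|x-y|^2$ otherwise. For a piecewise constant $u:[0,1]\to\mathbb R^n$, $\mathcal D_u\subset[0,1]$ is its finite set of discontinuities and $|\mathcal D_u|$ its cardinality. *)

theory Defs
  imports "HOL-Analysis.Analysis"
begin

definition drift_class :: "real \<Rightarrow> real \<Rightarrow> real \<Rightarrow> (real^'n \<Rightarrow> real^'n) \<Rightarrow> bool" where
  "drift_class \<kappa> R lam b \<longleftrightarrow>
     (\<exists>C. C-lipschitz_on UNIV b) \<and>
     (\<forall>x y. (norm x \<ge> R \<and> norm y \<ge> R \<longrightarrow> (b x - b y) \<bullet> (x - y) \<le> - \<kappa> * (norm (x - y))\<^sup>2) \<and>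
            (\<not> (norm x \<ge> R \<and> norm y \<ge> R) \<longrightarrow> (b x - b y) \<bullet> (x - y) \<le> lam * (norm (x - y))\<^sup>2))"

definition disc_set :: "(real \<Rightarrow> real^'n) \<Rightarrow> real set" where
  "disc_set u = {t \<in> {0..1}. \<not> continuous (at t within {0..1}) u}"

definition piecewise_const :: "(real \<Rightarrow> real^'n) \<Rightarrow> bool" where
  "piecewise_const u \<longleftrightarrow> finite (disc_set u) \<and>
     (\<forall>t \<in> {0..1} - disc_set u. \<exists>e>0. \<forall>s\<in>{0..1}. dist s t < e \<longrightarrow> u s = u t)"

definition solves :: "(real^'n \<Rightarrow> real^'n) \<Rightarrow> real^'n \<Rightarrow> (real \<Rightarrow> real^'n) \<Rightarrow> (real \<Rightarrow> real^'n)
    \<Rightarrow> (real \<Rightarrow> real^'n) \<Rightarrow> bool" where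
  "solves b x0 \<sigma> u x \<longleftrightarrow> continuous_on {0..1} x \<and>
     (\<forall>t\<in>{0..1}. x t = x0 + integral {0..t} (\<lambda>s. b (x s)) + \<sigma> t + integral {0..t} u)"

end

theory Submission
  imports Defs
begin

lemma local_sep:
  fixes z :: "real \<Rightarrow> 'a::real_inner"
  assumes cont: "continuous_on {0..1} z"
  and P: "\<And>s t r. 0 \<le> s \<Longrightarrow> s \<le> t \<Longrightarrow> t \<le> 1 \<Longrightarrow> (\<forall>\<tau>\<in>{s..t}. norm (z \<tau>) \<le> r) \<Longrightarrow>
            norm (z t - z s - ((t - s) * (2*c)) *\<^sub>R v) \<le> L * r * (t - s)"
  and v: "norm v = 1" and L: "L > 0" and c: "c > 0" and rho: "\<rho> > 0"
  and h: "8*L*h \<le> 1" and Lr: "4*L*\<rho> \<le> c"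
  and st: "0 \<le> s" "s \<le> t" "t \<le> 1" "t - s \<le> h" and zs: "norm (z s) \<le> \<rho>" and zt: "norm (z t) \<le> \<rho>"
  shows "c * (t - s) \<le> 2*\<rho>"
proof -
  have "continuous_on {s..t} (\<lambda>x. norm (z x))"
    by (rule continuous_on_norm, rule continuous_on_subset[OF cont]) (use st in auto)
  then obtain \<tau> where tau: "\<tau> \<in> {s..t}" and mx: "\<forall>y\<in>{s..t}. norm (z y) \<le> norm (z \<tau>)"
    using continuous_attains_sup[of "{s..t}" "\<lambda>x. norm (z x)"] st by auto
  define m where "m = norm (z \<tau>)"
  have m0: "m \<ge> 0" unfolding m_def by simp
  have P1: "norm (z \<tau> - z s - ((\<tau> - s) * (2*c)) *\<^sub>R v) \<le> L * m * (\<tau> - s)"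
    using P[of s \<tau> m] tau st mx unfolding m_def by auto
  have "m \<le> norm (z s) + norm (((\<tau> - s) * (2*c)) *\<^sub>R v) + L * m * (\<tau> - s)"
  proof -
    have "z \<tau> = (z s + ((\<tau> - s) * (2*c)) *\<^sub>R v) + (z \<tau> - z s - ((\<tau> - s) * (2*c)) *\<^sub>R v)" by simp
    hence "norm (z \<tau>) \<le> norm (z s + ((\<tau> - s) * (2*c)) *\<^sub>R v) + norm (z \<tau> - z s - ((\<tau> - s) * (2*c)) *\<^sub>R v)"
      by (metis norm_triangle_ineq)
    thus ?thesis using P1 norm_triangle_ineq[of "z s" "((\<tau> - s) * (2*c)) *\<^sub>R v"] unfolding m_def by linarith
  qed
  also have "norm (((\<tau> - s) * (2*c)) *\<^sub>R v) = (\<tau> - s) * (2*c)" using v tau c by auto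
  finally have m1: "m \<le> \<rho> + (\<tau> - s) * (2*c) + L * m * (\<tau> - s)" using zs by linarith
  have a1: "(\<tau> - s) * (2*c) \<le> h * (2*c)" using tau st c by (intro mult_right_mono) auto
  have a2: "L * m * (\<tau> - s) \<le> L * m * h" using tau st L m0 by (intro mult_left_mono) auto
  have "L * m * h \<le> m / 8" using h m0 L
  proof -
    have "m * (L * h) \<le> m * (1/8)" using h m0 by (intro mult_left_mono) auto
    thus ?thesis by (simp add: algebra_simps)
  qed
  moreover have "h * (2*c) = 2 * (c * h)" by simp
  ultimately have m2: "7 * m \<le> 8 * \<rho> + 16 * (c * h)" using m1 a1 a2 by linarith
  have Lm: "L * m \<le> 4 * c / 7"
  proof -
    have "7 * (L * m) = L * (7 * m)" by simp
    also have "\<dots> \<le> L * (8 * \<rho> + 16 * (c * h))" using m2 L by (intro mult_left_mono) auto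
    also have "\<dots> = 2 * (4 * L * \<rho>) + 2 * c * (8 * L * h)" by (simp add: algebra_simps)
    also have "\<dots> \<le> 2 * c + 2 * c * 1" using Lr h c by (intro add_mono mult_left_mono) auto
    finally show ?thesis by simp
  qed
  have P2: "norm (z t - z s - ((t - s) * (2*c)) *\<^sub>R v) \<le> L * m * (t - s)"
    using P[of s t m] st mx unfolding m_def by auto
  define d where "d = z t - z s - ((t - s) * (2*c)) *\<^sub>R v"
  have "inner v (z t - z s) = (t - s) * (2*c) + inner v d"
    unfolding d_def using v by (simp add: inner_diff_right algebra_simps dot_square_norm power2_eq_square)
  moreover have "\<bar>inner v d\<bar> \<le> L * m * (t - s)"
    using Cauchy_Schwarz_ineq2[of v d] P2 v unfolding d_def by simp
  moreover have "L * m * (t - s) \<le> (4*c/7) * (t - s)" using Lm st by (intro mult_right_mono) auto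
  moreover have "\<bar>inner v (z t)\<bar> \<le> \<rho>" "\<bar>inner v (z s)\<bar> \<le> \<rho>"
    using Cauchy_Schwarz_ineq2[of v "z t"] Cauchy_Schwarz_ineq2[of v "z s"] v zs zt by auto
  ultimately show ?thesis using st c by (simp add: inner_diff_right algebra_simps) 
qed

lemma closed_lebesgue: "closed (S::real set) \<Longrightarrow> S \<in> sets lebesgue"
  by (simp add: borel_closed)

lemma local_measure:
  fixes z :: "real \<Rightarrow> 'a::real_inner"
  assumes cont: "continuous_on {0..1} z"
  and P: "\<And>s t r. 0 \<le> s \<Longrightarrow> s \<le> t \<Longrightarrow> t \<le> 1 \<Longrightarrow> (\<forall>\<tau>\<in>{s..t}. norm (z \<tau>) \<le> r) \<Longrightarrow>
            norm (z t - z s - ((t - s) * (2*c)) *\<^sub>R v) \<le> L * r * (t - s)"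
  and v: "norm v = 1" and L: "L > 0" and c: "c > 0" and rho: "\<rho> > 0"
  and h: "8*L*h \<le> 1" and Lr: "4*L*\<rho> \<le> c"
  and ab: "0 \<le> a" "a \<le> b" "b \<le> 1" "b - a \<le> h"
  shows "{t\<in>{a..b}. norm (z t) \<le> \<rho>} \<in> sets lebesgue"
    "measure lebesgue {t\<in>{a..b}. norm (z t) \<le> \<rho>} \<le> 4*\<rho>/c"
proof -
  let ?T = "{t\<in>{a..b}. norm (z t) \<le> \<rho>}"
  have "continuous_on {a..b} (\<lambda>t. norm (z t))"
    by (rule continuous_on_norm, rule continuous_on_subset[OF cont]) (use ab in auto)
  hence "closed ({a..b} \<inter> (\<lambda>t. norm (z t)) -` {..\<rho>})"
    by (intro continuous_closed_preimage) auto
  moreover have "?T = {a..b} \<inter> (\<lambda>t. norm (z t)) -` {..\<rho>}" by auto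
  ultimately show meas: "?T \<in> sets lebesgue" by (simp add: closed_lebesgue)
  show "measure lebesgue ?T \<le> 4*\<rho>/c"
  proof (cases "?T = {}")
    case True
    have "measure lebesgue ?T = 0" by (simp only: True measure_empty)
    then show ?thesis using rho c by simp
  next
    case False
    then obtain t0 where t0: "t0 \<in> ?T" by blast
    have sub: "?T \<subseteq> {t0 - 2*\<rho>/c .. t0 + 2*\<rho>/c}"
    proof
      fix t assume t: "t \<in> ?T"
      have "c * \<bar>t - t0\<bar> \<le> 2*\<rho>"
      proof (cases "t0 \<le> t")
        case True
        have "c * (t - t0) \<le> 2*\<rho>"
          by (rule local_sep[OF cont P v L c rho h Lr]) (use t t0 ab True in auto)
        thus ?thesis using True by simp
      next
        case False
        have "c * (t0 - t) \<le> 2*\<rho>"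
          by (rule local_sep[OF cont P v L c rho h Lr]) (use t t0 ab False in auto)
        thus ?thesis using False by simp
      qed
      hence "\<bar>t - t0\<bar> \<le> 2*\<rho>/c" using c by (simp add: field_simps)
      thus "t \<in> {t0 - 2*\<rho>/c .. t0 + 2*\<rho>/c}" by auto
    qed
    have "measure lebesgue ?T \<le> measure lebesgue {t0 - 2*\<rho>/c .. t0 + 2*\<rho>/c}"
      by (rule measure_mono_fmeasurable[OF sub meas]) simp
    also have "\<dots> = 4*\<rho>/c" using rho c by simp
    finally show ?thesis .
  qed
qed

lemma global_measure:
  fixes z :: "real \<Rightarrow> 'a::real_inner"
  assumes cont: "continuous_on {0..1} z"
  and P: "\<And>s t r. 0 \<le> s \<Longrightarrow> s \<le> t \<Longrightarrow> t \<le> 1 \<Longrightarrow> (\<forall>\<tau>\<in>{s..t}. norm (z \<tau>) \<le> r) \<Longrightarrow>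
            norm (z t - z s - ((t - s) * (2*c)) *\<^sub>R v) \<le> L * r * (t - s)"
  and v: "norm v = 1" and L: "L > 0" and c: "c > 0" and rho: "\<rho> > 0"
  and N: "N > 0" "8*L \<le> real N" and Lr: "4*L*\<rho> \<le> c"
  shows "{t\<in>{0..1}. norm (z t) \<le> \<rho>} \<in> sets lebesgue"
    "measure lebesgue {t\<in>{0..1}. norm (z t) \<le> \<rho>} \<le> real N * (4*\<rho>/c)"
proof -
  let ?S = "{t\<in>{0..1}. norm (z t) \<le> \<rho>}"
  define T where "T k = {t\<in>{real k / N..real (Suc k) / N}. norm (z t) \<le> \<rho>}" for k
  have h: "8*L*(1/real N) \<le> 1" using N by (simp add: field_simps)
  have Tk: "T k \<in> sets lebesgue \<and> measure lebesgue (T k) \<le> 4*\<rho>/c" if "k < N" for k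
  proof -
    have Np: "real N > 0" using N by simp
    have ab1: "0 \<le> real k / N" by simp
    have ab2: "real k / N \<le> real (Suc k) / N" using Np by (intro divide_right_mono) auto
    have ab3: "real (Suc k) / N \<le> 1" using that Np by simp
    have ab4: "real (Suc k) / N - real k / N \<le> 1 / real N" by (simp add: diff_divide_distrib[symmetric])
    note ab = ab1 ab2 ab3 ab4
    note lm = local_measure[OF cont P v L c rho h Lr ab]
    show ?thesis unfolding T_def by (rule conjI[OF lm(1) lm(2)])
  qed
  have sub: "?S \<subseteq> (\<Union>k\<in>{..<N}. T k)"
  proof
    fix t assume t: "t \<in> ?S"
    show "t \<in> (\<Union>k\<in>{..<N}. T k)"
    proof (cases "t = 1")
      case True
      have "N - 1 < N" using N by simp
      moreover have "t \<in> T (N - 1)"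
      proof -
        have "Suc (N - 1) = N" using N by simp
        moreover have "real (N - 1) / N \<le> 1" using N by simp
        ultimately show ?thesis using t True N unfolding T_def by simp
      qed
      ultimately show ?thesis by blast
    next
      case False
      define k where "k = nat \<lfloor>t * N\<rfloor>"
      have t01: "0 \<le> t" "t < 1" using t False by auto
      have tN: "0 \<le> t * N" using t01 by simp
      have k1: "real k \<le> t * N" unfolding k_def using tN by linarith
      have k2: "t * N < real k + 1" unfolding k_def using tN by linarith
      have "t * N < N" using t01 N by simp
      hence "k < N" using k1 unfolding k_def using tN by linarith
      moreover have "t \<in> T k" using t k1 k2 N unfolding T_def by (auto simp: field_simps)
      ultimately show ?thesis by blast
    qed
  qed
  have "continuous_on {0..1} (\<lambda>t. norm (z t))"
    by (rule continuous_on_norm, rule cont)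
  hence "closed ({0..1} \<inter> (\<lambda>t. norm (z t)) -` {..\<rho>})"
    by (intro continuous_closed_preimage) auto
  moreover have "?S = {0..1} \<inter> (\<lambda>t. norm (z t)) -` {..\<rho>}" by auto
  ultimately show meas: "?S \<in> sets lebesgue" by (simp add: closed_lebesgue)
  have Um: "(\<Union>k\<in>{..<N}. T k) \<in> sets lebesgue" using Tk by auto
  have "bounded (\<Union>k\<in>{..<N}. T k)"
  proof -
    have "(\<Union>k\<in>{..<N}. T k) \<subseteq> {0..1}"
    proof
      fix t assume "t \<in> (\<Union>k\<in>{..<N}. T k)"
      then obtain k where k: "k < N" "t \<in> T k" by auto
      have b: "0 \<le> real k / N" "real (Suc k) / N \<le> 1" using k N by simp_all
      have t1: "real k / N \<le> t" "t \<le> real (Suc k) / N" using k(2) unfolding T_def by (simp_all only: mem_Collect_eq atLeastAtMost_iff)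
      have "0 \<le> t" using b(1) t1(1) by linarith
      moreover have "t \<le> 1" using b(2) t1(2) by linarith
      ultimately show "t \<in> {0..1}" by simp
    qed
    thus ?thesis by (rule bounded_subset[rotated]) simp
  qed
  hence Uf: "(\<Union>k\<in>{..<N}. T k) \<in> lmeasurable" using Um by (rule bounded_set_imp_lmeasurable)
  have "measure lebesgue ?S \<le> measure lebesgue (\<Union>k\<in>{..<N}. T k)"
    by (rule measure_mono_fmeasurable[OF sub meas Uf])
  also have "\<dots> \<le> (\<Sum>k\<in>{..<N}. measure lebesgue (T k))"
    by (rule measure_UNION_le) (use Tk in auto)
  also have "\<dots> \<le> (\<Sum>k\<in>{..<N}. 4*\<rho>/c)"
    by (rule sum_mono) (use Tk in auto)
  also have "\<dots> = real N * (4*\<rho>/c)" by simp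
  finally show "measure lebesgue ?S \<le> real N * (4*\<rho>/c)" .
qed

lemma const_disc: "disc_set (\<lambda>t. w) = {}"
  unfolding disc_set_def by auto

lemma const_pc: "piecewise_const (\<lambda>t. w)"
  unfolding piecewise_const_def const_disc by (auto intro: exI[of _ 1])

lemma sol_cont_b:
  assumes Lip: "C-lipschitz_on UNIV b" and s: "solves b x0 \<sigma> u x"
  shows "continuous_on {0..1} (\<lambda>\<tau>. b (x \<tau>))"
proof -
  have "continuous_on UNIV b" using Lip by (rule lipschitz_on_continuous_on)
  moreover have "continuous_on {0..1} x" using s unfolding solves_def by simp
  ultimately show ?thesis by (rule continuous_on_compose2) auto
qed

lemma sol_int_diff:
  assumes Lip: "C-lipschitz_on UNIV b" and s: "solves b x0 \<sigma> u x"
    and st: "0 \<le> s" "s \<le> t" "t \<le> 1"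
  shows "integral {0..t} (\<lambda>\<tau>. b (x \<tau>)) - integral {0..s} (\<lambda>\<tau>. b (x \<tau>)) = integral {s..t} (\<lambda>\<tau>. b (x \<tau>))"
    "(\<lambda>\<tau>. b (x \<tau>)) integrable_on {s..t}"
proof -
  have "continuous_on {0..t} (\<lambda>\<tau>. b (x \<tau>))"
    by (rule continuous_on_subset[OF sol_cont_b[OF Lip s]]) (use st in auto)
  hence int: "(\<lambda>\<tau>. b (x \<tau>)) integrable_on {0..t}" by (rule integrable_continuous_real)
  have "integral {0..s} (\<lambda>\<tau>. b (x \<tau>)) + integral {s..t} (\<lambda>\<tau>. b (x \<tau>)) = integral {0..t} (\<lambda>\<tau>. b (x \<tau>))"
    by (rule Henstock_Kurzweil_Integration.integral_combine[OF st(1) st(2) int])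
  thus "integral {0..t} (\<lambda>\<tau>. b (x \<tau>)) - integral {0..s} (\<lambda>\<tau>. b (x \<tau>)) = integral {s..t} (\<lambda>\<tau>. b (x \<tau>))"
    by (simp add: algebra_simps)
  show "(\<lambda>\<tau>. b (x \<tau>)) integrable_on {s..t}"
    by (rule integrable_on_subinterval[OF int]) (use st in auto)
qed

lemma vec_aux:
  fixes v F1 F2 G1 G2 X S1 S2 :: "'a::real_vector"
  shows "((X + F1 + S1 + t *\<^sub>R (c *\<^sub>R v)) - (X + G1 + S1 - t *\<^sub>R (c *\<^sub>R v))) -
     ((X + F2 + S2 + s *\<^sub>R (c *\<^sub>R v)) - (X + G2 + S2 - s *\<^sub>R (c *\<^sub>R v))) - ((t - s) * (2*c)) *\<^sub>R v
   = (F1 - F2) - (G1 - G2)"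
proof -
  have eqr: "(t - s) * (2*c) = t*c + t*c - s*c - s*c" by (simp add: algebra_simps)
  have 1: "((t - s) * (2*c)) *\<^sub>R v = (t*c) *\<^sub>R v + (t*c) *\<^sub>R v - (s*c) *\<^sub>R v - (s*c) *\<^sub>R v"
    by (simp only: eqr scaleR_add_left scaleR_diff_left)
  have 2: "t *\<^sub>R (c *\<^sub>R v) = (t*c) *\<^sub>R v" "s *\<^sub>R (c *\<^sub>R v) = (s*c) *\<^sub>R v" by simp_all
  show ?thesis unfolding 1 2 by (simp add: algebra_simps)
qed

lemma P_from_solves:
  fixes b :: "real^'n \<Rightarrow> real^'n"
  assumes Lip: "C-lipschitz_on UNIV b" and s1: "solves b x0 \<sigma> (\<lambda>t. c *\<^sub>R v) x1"
    and s2: "solves b x0 \<sigma> (\<lambda>t. -(c *\<^sub>R v)) x2"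
    and st: "0 \<le> s" "s \<le> t" "t \<le> 1" and bd: "\<forall>\<tau>\<in>{s..t}. norm (x1 \<tau> - x2 \<tau>) \<le> r"
  shows "norm ((x1 t - x2 t) - (x1 s - x2 s) - ((t - s) * (2*c)) *\<^sub>R v) \<le> (C+1) * r * (t - s)"
proof -
  let ?f = "\<lambda>\<tau>. b (x1 \<tau>)" and ?g = "\<lambda>\<tau>. b (x2 \<tau>)"
  have C0: "C \<ge> 0" using Lip by (rule lipschitz_on_nonneg)
  have r0: "r \<ge> 0" using bd st by (metis atLeastAtMost_iff norm_ge_zero order.trans order_refl)
  have e1: "x1 t = x0 + integral {0..t} ?f + \<sigma> t + t *\<^sub>R (c *\<^sub>R v)"
    "x1 s = x0 + integral {0..s} ?f + \<sigma> s + s *\<^sub>R (c *\<^sub>R v)"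
    using s1 st unfolding solves_def by auto
  have e2: "x2 t = x0 + integral {0..t} ?g + \<sigma> t - t *\<^sub>R (c *\<^sub>R v)"
    "x2 s = x0 + integral {0..s} ?g + \<sigma> s - s *\<^sub>R (c *\<^sub>R v)"
    using s2 st unfolding solves_def by auto
  have "(x1 t - x2 t) - (x1 s - x2 s) - ((t - s) * (2*c)) *\<^sub>R v
     = (integral {0..t} ?f - integral {0..s} ?f) - (integral {0..t} ?g - integral {0..s} ?g)"
    unfolding e1 e2 by (rule vec_aux)
  also have "\<dots> = integral {s..t} ?f - integral {s..t} ?g"
    using sol_int_diff(1)[OF Lip s1 st] sol_int_diff(1)[OF Lip s2 st] by simp
  also have "\<dots> = integral {s..t} (\<lambda>\<tau>. ?f \<tau> - ?g \<tau>)"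
    by (rule integral_diff[symmetric]) (rule sol_int_diff(2)[OF Lip s1 st], rule sol_int_diff(2)[OF Lip s2 st])
  finally have eq: "(x1 t - x2 t) - (x1 s - x2 s) - ((t - s) * (2*c)) *\<^sub>R v = integral {s..t} (\<lambda>\<tau>. ?f \<tau> - ?g \<tau>)" .
  have intd: "(\<lambda>\<tau>. ?f \<tau> - ?g \<tau>) integrable_on {s..t}"
    by (rule integrable_diff) (rule sol_int_diff(2)[OF Lip s1 st], rule sol_int_diff(2)[OF Lip s2 st])
  have bnd: "norm (?f \<tau> - ?g \<tau>) \<le> (C+1) * r" if "\<tau> \<in> cbox s t" for \<tau>
  proof -
    have tau: "\<tau> \<in> {s..t}" using that by simp
    have "norm (?f \<tau> - ?g \<tau>) = dist (b (x1 \<tau>)) (b (x2 \<tau>))" by (simp add: dist_norm)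
    also have "\<dots> \<le> C * dist (x1 \<tau>) (x2 \<tau>)" using Lip by (rule lipschitz_onD) auto
    also have "\<dots> \<le> C * r" using bd tau C0 by (intro mult_left_mono) (auto simp: dist_norm)
    also have "\<dots> \<le> (C+1) * r" using r0 by (simp add: algebra_simps)
    finally show ?thesis .
  qed
  have hi: "((\<lambda>\<tau>. ?f \<tau> - ?g \<tau>) has_integral integral {s..t} (\<lambda>\<tau>. ?f \<tau> - ?g \<tau>)) (cbox s t)"
    using intd by (simp add: integrable_integral)
  have "0 \<le> (C+1) * r" using C0 r0 by simp
  from has_integral_bound[OF this hi bnd]
  have "norm (integral {s..t} (\<lambda>\<tau>. ?f \<tau> - ?g \<tau>)) \<le> ((C+1) * r) * (t - s)" using st by simp
  thus ?thesis using eq st by simp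
qed

lemma gt_meas:
  fixes x :: "real \<Rightarrow> 'a::real_normed_vector"
  assumes "continuous_on {0..1} x"
  shows "{t\<in>{0..1}. norm (x t) > R} \<in> sets lebesgue"
proof -
  have "continuous_on {0..1} (\<lambda>t. norm (x t))" by (rule continuous_on_norm, rule assms)
  hence "closed ({0..1} \<inter> (\<lambda>t. norm (x t)) -` {..R})"
    by (intro continuous_closed_preimage) auto
  moreover have "{t\<in>{0..1}. norm (x t) > R} = {0..1} - ({0..1} \<inter> (\<lambda>t. norm (x t)) -` {..R})" by auto
  ultimately show ?thesis by (simp add: closed_lebesgue)
qed

theorem proposition3p9:
  fixes b :: "real^'n \<Rightarrow> real^'n" and \<kappa> R lam \<eta> Rbar :: real
  assumes "drift_class \<kappa> R lam b" and "\<kappa> > 0" and "R \<ge> 0" and "lam \<ge> 0"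
    and "\<eta> < 1/2" and "Rbar > 0"
  shows "\<exists>M>0. \<forall>(\<sigma>::real \<Rightarrow> real^'n) x0. continuous_on {0..1} \<sigma> \<and> \<sigma> 0 = 0 \<longrightarrow>
           (\<exists>u. piecewise_const u \<and>
                (\<forall>t\<in>{0..1}. norm (u t) + real (card (disc_set u)) \<le> M) \<and>
                (\<forall>x. solves b x0 \<sigma> u x \<longrightarrow>
                       measure lebesgue {t \<in> {0..1}. norm (x t) > Rbar} \<ge> \<eta>))"
proof -
  obtain C where Lip: "C-lipschitz_on UNIV b" using assms(1) unfolding drift_class_def by blast
  have C0: "C \<ge> 0" using Lip by (rule lipschitz_on_nonneg)
  define L where "L = C + 1"
  have L: "L > 0" using C0 by (simp add: L_def)
  define N where "N = nat \<lceil>8*L\<rceil> + 1"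
  have N1: "N > 0" unfolding N_def by simp
  have "8*L \<le> of_int \<lceil>8*L\<rceil>" by (rule le_of_int_ceiling)
  moreover have "real (nat \<lceil>8*L\<rceil>) = of_int \<lceil>8*L\<rceil>" using L by simp
  moreover have "real N = real (nat \<lceil>8*L\<rceil>) + 1" unfolding N_def by simp
  ultimately have N2: "8*L \<le> real N" by linarith
  define \<rho> where "\<rho> = 2*Rbar"
  have rho: "\<rho> > 0" using assms(6) by (simp add: \<rho>_def)
  have pos: "1 - 2*\<eta> > 0" using assms(5) by simp
  define c where "c = 4*L*\<rho> + real N * (4*\<rho>) / (1 - 2*\<eta>) + 1"
  have t1: "0 \<le> 4*L*\<rho>" using L rho by simp
  have t2: "0 \<le> real N * (4*\<rho>) / (1 - 2*\<eta>)" using pos rho by simp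
  have c: "c > 0" unfolding c_def using t1 t2 by simp
  have cL: "4*L*\<rho> \<le> c" unfolding c_def using t2 by simp
  have cN: "real N * (4*\<rho>/c) \<le> 1 - 2*\<eta>"
  proof -
    have "real N * (4*\<rho>) / (1 - 2*\<eta>) \<le> c" unfolding c_def using t1 by simp
    hence "real N * (4*\<rho>) \<le> c * (1 - 2*\<eta>)" using pos by (simp add: divide_le_eq)
    thus ?thesis using c by (simp add: divide_le_eq mult.commute)
  qed
  define v :: "real^'n" where "v = axis undefined 1"
  have v: "norm v = 1" by (simp add: v_def)
  show ?thesis
  proof (intro exI[of _ c] conjI allI impI)
    show "c > 0" by (rule c)
    fix \<sigma> :: "real \<Rightarrow> real^'n" and x0 assume h\<sigma>: "continuous_on {0..1} \<sigma> \<and> \<sigma> 0 = 0"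
    show "\<exists>u. piecewise_const u \<and>
                (\<forall>t\<in>{0..1}. norm (u t) + real (card (disc_set u)) \<le> c) \<and>
                (\<forall>x. solves b x0 \<sigma> u x \<longrightarrow>
                       measure lebesgue {t \<in> {0..1}. norm (x t) > Rbar} \<ge> \<eta>)"
    proof (rule ccontr)
      assume neg: "\<not> ?thesis"
      have negu: "\<not> (\<forall>x. solves b x0 \<sigma> u x \<longrightarrow> measure lebesgue {t \<in> {0..1}. norm (x t) > Rbar} \<ge> \<eta>)"
        if "piecewise_const u" "\<forall>t\<in>{0..1}. norm (u t) + real (card (disc_set u)) \<le> c" for u
        using neg that by blast
      have okc: "\<forall>t\<in>{0..1}. norm ((\<lambda>t. w) t) + real (card (disc_set (\<lambda>t. w))) \<le> c"
        if "norm w = c" for w :: "real^'n"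
        using that by (simp add: const_disc)
      have n1: "norm (c *\<^sub>R v) = c" using v c by simp
      have n2: "norm (-(c *\<^sub>R v)) = c" using v c by simp
      from negu[OF const_pc okc[OF n1]]
      obtain x1 where s1: "solves b x0 \<sigma> (\<lambda>t. c *\<^sub>R v) x1"
        and m1': "\<not> measure lebesgue {t \<in> {0..1}. norm (x1 t) > Rbar} \<ge> \<eta>" by blast
      from negu[OF const_pc okc[OF n2]]
      obtain x2 where s2: "solves b x0 \<sigma> (\<lambda>t. -(c *\<^sub>R v)) x2"
        and m2': "\<not> measure lebesgue {t \<in> {0..1}. norm (x2 t) > Rbar} \<ge> \<eta>" by blast
      have m1: "measure lebesgue {t \<in> {0..1}. norm (x1 t) > Rbar} < \<eta>" using m1' by linarith
      have m2: "measure lebesgue {t \<in> {0..1}. norm (x2 t) > Rbar} < \<eta>" using m2' by linarith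
      define z where "z t = x1 t - x2 t" for t
      have c1: "continuous_on {0..1} x1" using s1 unfolding solves_def by simp
      have c2: "continuous_on {0..1} x2" using s2 unfolding solves_def by simp
      have cz: "continuous_on {0..1} z" unfolding z_def using c1 c2 by (intro continuous_on_diff)
      have P: "norm (z t - z s - ((t - s) * (2*c)) *\<^sub>R v) \<le> L * r * (t - s)"
        if "0 \<le> s" "s \<le> t" "t \<le> 1" "\<forall>\<tau>\<in>{s..t}. norm (z \<tau>) \<le> r" for s t r
        using P_from_solves[OF Lip s1 s2 that(1-3), of r] that(4) unfolding z_def L_def by simp
      note gm = global_measure[OF cz P v L c rho N1 N2 cL]
      let ?S = "{t\<in>{0..1}. norm (z t) \<le> \<rho>}"
      let ?G1 = "{t \<in> {0..1}. norm (x1 t) > Rbar}" and ?G2 = "{t \<in> {0..1}. norm (x2 t) > Rbar}"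
      have G1: "?G1 \<in> sets lebesgue" by (rule gt_meas[OF c1])
      have G2: "?G2 \<in> sets lebesgue" by (rule gt_meas[OF c2])
      have sub: "{0..1} - ?S \<subseteq> ?G1 \<union> ?G2"
      proof
        fix t assume t: "t \<in> {0..1} - ?S"
        hence "norm (z t) > 2*Rbar" "t \<in> {0..1}" by (auto simp: \<rho>_def)
        moreover have "norm (z t) \<le> norm (x1 t) + norm (x2 t)" unfolding z_def by (rule norm_triangle_ineq4)
        ultimately show "t \<in> ?G1 \<union> ?G2" by auto
      qed
      have I: "{0..1::real} \<in> lmeasurable" by simp
      have I01: "{0..1::real} \<in> sets lebesgue" by simp
      have S01: "?S \<subseteq> {0..1}" by blast
      have Dm: "{0..1} - ?S \<in> sets lebesgue" by (rule sets.Diff[OF I01 gm(1)])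
      hence Ie: "emeasure lebesgue {0..1::real} \<noteq> \<infinity>" by (simp add: fmeasurable_def)
      have "measure lebesgue ({0..1} - ?S) = measure lebesgue {0..1::real} - measure lebesgue ?S"
        by (rule measure_Diff[OF Ie I01 gm(1) S01])
      also have "measure lebesgue {0..1::real} = 1" by simp
      finally have eqD: "measure lebesgue ({0..1} - ?S) = 1 - measure lebesgue ?S" .
      have "bounded (?G1 \<union> ?G2)" by (rule bounded_subset[of "{0..1}"]) (simp, blast)
      moreover have "?G1 \<union> ?G2 \<in> sets lebesgue" by (rule sets.Un[OF G1 G2])
      ultimately have Uf: "?G1 \<union> ?G2 \<in> lmeasurable" by (rule bounded_set_imp_lmeasurable)
      have "measure lebesgue ({0..1} - ?S) \<le> measure lebesgue (?G1 \<union> ?G2)"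
        by (rule measure_mono_fmeasurable[OF sub Dm Uf])
      also have "\<dots> \<le> measure lebesgue ?G1 + measure lebesgue ?G2" by (rule measure_Un_le[OF G1 G2])
      finally show False using eqD m1 m2 gm(2) cN by linarith
    qed
  qed
qed

end
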